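(* Let $m$ be a positive integer and let $d(m)$ denote the number of positive divisors of $m$. Let $b_1,\ldots,b_m$ be complex numbers satisfying $$\sum_{k=1}^{m} b_k\, k^{r}=0\qquad\text{for every integer } r \text{ with } 0\le r\le d(m)-1 .$$ Define $$Z_m(s)=\sum_{n=0}^{\infty}\ \sum_{k=1}^{m}\frac{b_k}{(mn+k)^s},$$ where the series is summed over $n$, each inner sum over $k=1,\ldots,m$ being taken in full. Then this series over $n$ converges for every complex $s$ with $\operatorname{Re}(s)>2-d(m)$, and $Z_m(s)$ is analytic in the half-plane $\operatorname{Re}(s)>2-d(m)$.
   Context: For $x>0$ and complex $s$, $x^{-s}=e^{-s\log x}$ with the real logarithm. $d(m)$ is the number of positive integer divisors of $m$. *)

theory Defs
  imports "HOL-Analysis.Analysis"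
begin

definition num_divisors :: "nat \<Rightarrow> nat" where
  "num_divisors m = card {k. k dvd m}"

end

theory Submission imports Defs "HOL-Complex_Analysis.Complex_Analysis" begin

lemma term_bound:
  fixes b :: "nat \<Rightarrow> complex" and s :: complex
  assumes m: "m > 0" and D: "D \<ge> 1"
    and mom: "\<And>r. r \<le> D - 1 \<Longrightarrow> (\<Sum>k=1..m. b k * of_nat k ^ r) = 0"
    and sD: "Re s + real D \<ge> 0"
    and n: "n \<ge> 1"
  shows "norm (\<Sum>k=1..m. b k / of_nat (m*n+k) powr s)
     \<le> (\<Sum>k=1..m. norm (b k)) * (real m ^ D / fact (D-1) * ((cmod s + D)^D * (real (m*n)) powr (-(Re s + D))))"
proof -
  define N where "N = real (m*n)"
  have "1 \<le> m*n" using m n by (simp add: Suc_le_eq)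
  then have N1: "N \<ge> 1" unfolding N_def by (metis of_nat_1 of_nat_le_iff)
  define c where "c i = (\<Prod>j<i. (-s - of_nat j))" for i
  define g where "g i w = c i * (of_real N + w) powr (-s - of_nat i)" for i w
  define S where "S = complex_of_real ` {0..}"
  define B where "B = (cmod s + D)^D * N powr (-(Re s + D))"
  have cvx: "convex S" unfolding S_def
    by (intro convex_linear_image) (auto intro: bounded_linear.linear bounded_linear_of_real)
  have der: "(g i has_field_derivative g (Suc i) x) (at x within S)" if "x \<in> S" for i x
  proof -
    obtain t where t: "t \<ge> 0" "x = of_real t" using \<open>x \<in> S\<close> by (auto simp: S_def)
    have nn: "of_real N + x \<notin> \<real>\<^sub>\<le>\<^sub>0" using t N1 by (simp add: complex_nonpos_Reals_iff)
    have "((\<lambda>w. of_real N + w) has_field_derivative 1) (at x)"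
      by (auto intro!: derivative_eq_intros)
    from DERIV_chain2[OF has_field_derivative_powr[OF nn, of "-s - of_nat i"] this]
    have "((\<lambda>w. (of_real N + w) powr (-s - of_nat i)) has_field_derivative
            (-s - of_nat i) * (of_real N + x) powr (-s - of_nat i - 1) * 1) (at x)" .
    from DERIV_cmult[OF this, of "c i"]
    have "(g i has_field_derivative g (Suc i) x) (at x)"
      unfolding g_def c_def by (simp add: algebra_simps)
    thus ?thesis by (rule has_field_derivative_at_within)
  qed
  have cbound: "cmod (c D) \<le> (cmod s + D)^D"
  proof -
    have "cmod (c D) = (\<Prod>j<D. cmod (-s - of_nat j))" by (simp add: c_def prod_norm)
    also have "\<dots> \<le> (\<Prod>j<D. cmod s + D)"
    proof (rule prod_mono)
      fix j assume "j \<in> {..<D}"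
      then have "cmod (-s - of_nat j) \<le> cmod s + j"
        by (metis norm_diff_ineq norm_minus_cancel norm_of_nat add.commute norm_triangle_ineq4)
      then show "0 \<le> cmod (-s - of_nat j) \<and> cmod (-s - of_nat j) \<le> cmod s + D"
        using \<open>j \<in> {..<D}\<close> by auto
    qed
    finally show ?thesis by simp
  qed
  have Bb: "cmod (g (Suc (D-1)) x) \<le> B" if "x \<in> S" for x
  proof -
    obtain t where t: "t \<ge> 0" "x = of_real t" using \<open>x \<in> S\<close> by (auto simp: S_def)
    have "cmod (g D x) = cmod (c D) * (N + t) powr (-(Re s) - D)"
      using t N1 by (simp add: g_def norm_mult norm_powr_real_powr)
    also have "\<dots> \<le> (cmod s + D)^D * N powr (-(Re s + D))"
    proof (rule mult_mono[OF cbound])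
      show "(N + t) powr (- Re s - real D) \<le> N powr (- (Re s + real D))"
        using t N1 sD powr_mono2'[of "-(Re s + D)" N "N+t"] by simp
    qed auto
    finally show ?thesis using D by (simp add: B_def)
  qed
  have tay: "cmod (g 0 (of_nat k) - (\<Sum>i\<le>D-1. g i 0 * (of_nat k - 0) ^ i / fact i))
             \<le> B * real m ^ D / fact (D-1)" if k: "k \<in> {1..m}" for k
  proof -
    have "cmod (g 0 (of_nat k) - (\<Sum>i\<le>D-1. g i 0 * (of_nat k - 0) ^ i / fact i))
        \<le> B * cmod (of_nat k - 0) ^ Suc (D-1) / fact (D-1)"
      by (rule complex_Taylor[OF cvx der Bb]) (auto simp: S_def intro!: image_eqI[of _ _ "real k"])
    also have "\<dots> \<le> B * real m ^ D / fact (D-1)"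
    proof -
      have "B \<ge> 0" unfolding B_def by simp
      moreover have "real k ^ D \<le> real m ^ D" using k by (intro power_mono) auto
      ultimately show ?thesis using D by (simp add: divide_right_mono mult_left_mono)
    qed
    finally show ?thesis .
  qed
  define P where "P k = (\<Sum>i\<le>D-1. g i 0 * (of_nat k - 0) ^ i / fact i)" for k :: nat
  have P0: "(\<Sum>k=1..m. b k * P k) = 0"
  proof -
    have "(\<Sum>k=1..m. b k * P k) = (\<Sum>i\<le>D-1. g i 0 / fact i * (\<Sum>k=1..m. b k * of_nat k ^ i))"
      unfolding P_def by (simp add: sum_distrib_left sum_distrib_right algebra_simps) (rule sum.swap)
    also have "\<dots> = 0" using mom by simp
    finally show ?thesis .
  qed
  have eq: "b k / of_nat (m*n+k) powr s = b k * g 0 (of_nat k)" for k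
    by (simp add: g_def c_def N_def powr_minus divide_inverse)
  have "(\<Sum>k=1..m. b k / of_nat (m*n+k) powr s) = (\<Sum>k=1..m. b k * g 0 (of_nat k))"
    by (rule sum.cong[OF refl]) (rule eq)
  also have "\<dots> = (\<Sum>k=1..m. b k * (g 0 (of_nat k) - P k))"
    using P0 by (simp add: right_diff_distrib sum_subtractf)
  finally have E: "(\<Sum>k=1..m. b k / of_nat (m*n+k) powr s) = (\<Sum>k=1..m. b k * (g 0 (of_nat k) - P k))" .
  have "norm (\<Sum>k=1..m. b k / of_nat (m*n+k) powr s) \<le> (\<Sum>k=1..m. norm (b k * (g 0 (of_nat k) - P k)))"
    unfolding E by (rule norm_sum)
  also have "\<dots> \<le> (\<Sum>k=1..m. norm (b k) * (B * real m ^ D / fact (D-1)))"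
  proof (rule sum_mono)
    fix k assume "k \<in> {1..m}"
    from tay[OF this] show "norm (b k * (g 0 (of_nat k) - P k)) \<le> norm (b k) * (B * real m ^ D / fact (D-1))"
      unfolding norm_mult P_def by (intro mult_left_mono) auto
  qed
  also have "\<dots> = (\<Sum>k=1..m. norm (b k)) * (real m ^ D / fact (D-1) * ((cmod s + D)^D * (real (m*n)) powr (-(Re s + D))))"
  proof -
    have "B * real m ^ D / fact (D-1) = real m ^ D / fact (D-1) * ((cmod s + D)^D * (real (m*n)) powr (-(Re s + D)))"
      by (simp add: B_def N_def)
    then show ?thesis by (simp only: sum_distrib_right)
  qed
  finally show ?thesis .
qed
theorem theorem1:
  fixes m :: nat and b :: "nat \<Rightarrow> complex"
  assumes "m > 0"
    and "\<And>r::nat. r \<le> num_divisors m - 1 \<Longrightarrow> (\<Sum>k=1..m. b k * of_nat k ^ r) = 0"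
  shows "(\<forall>s. Re s > 2 - real (num_divisors m) \<longrightarrow>
           summable (\<lambda>n. \<Sum>k=1..m. b k / of_nat (m * n + k) powr s)) \<and>
         ((\<lambda>s. \<Sum>n. \<Sum>k=1..m. b k / of_nat (m * n + k) powr s)
           analytic_on {s. Re s > 2 - real (num_divisors m)})"
proof -
  define D where "D = num_divisors m"
  have fin: "finite {k. k dvd m}"
  proof (rule finite_subset[of _ "{..m}"])
    show "{k. k dvd m} \<subseteq> {..m}" using assms(1) by (auto dest: dvd_imp_le)
  qed simp
  have D1: "D \<ge> 1" unfolding D_def num_divisors_def
  proof -
    have "1 \<in> {k. k dvd m}" by simp
    then have "{k. k dvd m} \<noteq> {}" by blast
    then have "0 < card {k. k dvd m}" using fin by (simp only: card_gt_0_iff) blast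
    then show "1 \<le> card {k. k dvd m}" by simp
  qed
  define S where "S = {s::complex. Re s > 2 - real D}"
  have oS: "open S" unfolding S_def by (rule open_halfspace_Re_gt)
  define f where "f n s = (\<Sum>k=1..m. b k / of_nat (m * n + k) powr s)" for n s
  define K where "K = (\<Sum>k=1..m. norm (b k)) * (real m ^ D / fact (D-1))"
  have K0: "K \<ge> 0" unfolding K_def by (intro mult_nonneg_nonneg divide_nonneg_nonneg sum_nonneg) auto
  have hol: "f n holomorphic_on UNIV" for n
    unfolding f_def
  proof (intro holomorphic_on_sum holomorphic_on_divide holomorphic_on_const holomorphic_on_powr_right holomorphic_on_ident)
    fix k z assume "k \<in> {1..m}"
    then have "m*n+k \<noteq> 0" by simp
    then have nz: "(of_nat (m*n+k)::complex) \<noteq> 0" by (simp only: of_nat_eq_0_iff not_False_eq_True)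
    show "of_nat (m * n + k) powr z \<noteq> (0::complex)" unfolding powr_def using nz by simp
  qed
  have hfd: "(f n has_field_derivative deriv (f n) x) (at x)" for n x
    by (rule holomorphic_derivI[OF hol]) auto
  have loc: "\<exists>d h. 0 < d \<and> summable h \<and> (\<forall>\<^sub>F n in sequentially. \<forall>y\<in>ball x d \<inter> S. norm (f n y) \<le> h n)"
    if "x \<in> S" for x
  proof -
    define h where "h = (\<lambda>n. K * (cmod x + 1 + D)^D * inverse (of_nat n ^ 2 :: real))"
    have sh: "summable h" unfolding h_def by (intro summable_mult inverse_power_summable) auto
    have ev: "\<forall>\<^sub>F n in sequentially. \<forall>y\<in>ball x 1 \<inter> S. norm (f n y) \<le> h n"
      using eventually_ge_at_top[of "1::nat"]
    proof eventually_elim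
      case (elim n)
      show ?case
      proof
        fix y assume y: "y \<in> ball x 1 \<inter> S"
        then have ry: "Re y + real D \<ge> 2" by (auto simp: S_def)
        have "cmod (y - x) < 1" using y by (auto simp: dist_norm norm_minus_commute)
        then have cy: "cmod y \<le> cmod x + 1" using norm_triangle_sub[of y x] by linarith
        have "1 \<le> m*n" using assms(1) elim by (simp add: Suc_le_eq)
        then have mn1: "1 \<le> real (m*n)" by (metis of_nat_1 of_nat_le_iff)
        have mn: "real n \<le> real (m*n)" "1 \<le> real n" using assms(1) elim by auto
        have "real (m*n) powr (-(Re y + D)) \<le> real (m*n) powr (-2)"
          by (rule powr_mono) (use ry mn1 in auto)
        also have "\<dots> \<le> real n powr (-2)"
          by (rule powr_mono2') (use mn in auto)
        also have "\<dots> = inverse (real n ^ 2)"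
          using mn by (simp add: powr_minus powr_numeral)
        finally have p: "real (m*n) powr (-(Re y + D)) \<le> inverse (real n ^ 2)" .
        have tb: "norm (f n y) \<le> (\<Sum>k=1..m. norm (b k)) * (real m ^ D / fact (D-1) * ((cmod y + D)^D * real (m*n) powr (-(Re y + D))))"
          unfolding f_def by (rule term_bound[OF assms(1) D1 assms(2)[folded D_def]]) (use ry elim in auto)
        have pw: "(cmod y + D)^D \<le> (cmod x + 1 + D)^D"
          by (rule power_mono) (use cy in auto)
        have "(cmod y + D)^D * real (m*n) powr (-(Re y + D)) \<le> (cmod x + 1 + D)^D * inverse (real n ^ 2)"
          by (rule mult_mono[OF pw p]) auto
        then have "K * ((cmod y + D)^D * real (m*n) powr (-(Re y + D))) \<le> K * ((cmod x + 1 + D)^D * inverse (real n ^ 2))"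
          by (rule mult_left_mono) (rule K0)
        moreover have "norm (f n y) \<le> K * ((cmod y + D)^D * real (m*n) powr (-(Re y + D)))"
          using tb unfolding K_def by (simp only: mult.assoc)
        ultimately show "norm (f n y) \<le> h n" unfolding h_def by (simp only: mult.assoc)
      qed
    qed
    show ?thesis using sh ev by (intro exI[of _ "1::real"] exI[of _ h]) simp
  qed
  from series_and_derivative_comparison_local[OF oS hfd loc]
  obtain g g' where gg: "\<forall>x\<in>S. ((\<lambda>n. f n x) sums g x) \<and> ((\<lambda>n. deriv (f n) x) sums g' x) \<and> (g has_field_derivative g' x) (at x)"
    by blast
  have sm: "summable (\<lambda>n. f n s)" if "s \<in> S" for s
    using gg that sums_summable by blast
  have hS: "(\<lambda>s. \<Sum>n. f n s) holomorphic_on S"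
    unfolding holomorphic_on_def field_differentiable_def
  proof
    fix x assume x: "x \<in> S"
    have "((\<lambda>s. \<Sum>n. f n s) has_field_derivative g' x) (at x)"
    proof (rule has_field_derivative_transform_within_open[of g "g' x" x S])
      show "(g has_field_derivative g' x) (at x)" using gg x by blast
      show "open S" by (rule oS)
      show "x \<in> S" by (rule x)
      fix z assume "z \<in> S"
      then have "(\<lambda>n. f n z) sums g z" using gg by blast
      then show "g z = (\<Sum>n. f n z)" by (simp add: sums_iff)
    qed
    then show "\<exists>f'. ((\<lambda>s. \<Sum>n. f n s) has_field_derivative f') (at x within S)"
      by (blast intro: has_field_derivative_at_within)
  qed
  have an: "(\<lambda>s. \<Sum>n. f n s) analytic_on S" using analytic_on_open[OF oS] hS by blast
  show ?thesis
  proof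
    show "\<forall>s. Re s > 2 - real (num_divisors m) \<longrightarrow> summable (\<lambda>n. \<Sum>k=1..m. b k / of_nat (m * n + k) powr s)"
    proof (intro allI impI)
      fix s :: complex assume "Re s > 2 - real (num_divisors m)"
      then have "s \<in> S" by (simp add: S_def D_def)
      from sm[OF this] show "summable (\<lambda>n. \<Sum>k=1..m. b k / of_nat (m * n + k) powr s)"
        by (simp only: f_def)
    qed
    show "(\<lambda>s. \<Sum>n. \<Sum>k=1..m. b k / of_nat (m * n + k) powr s) analytic_on {s. Re s > 2 - real (num_divisors m)}"
      using an unfolding S_def D_def f_def .
  qed
qed
end
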